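(* Let $M_{\mathrm{B_{ii}}}$ be the monoid with generators $a,b,c$ and relations $cbb=bba$, $bc=ab$, $ac=ca$. Then $M_{\mathrm{B_{ii}}}$ satisfies the cancellation condition: for $A,B,X,Y\in M_{\mathrm{B_{ii}}}$, $AXB=AYB$ implies $X=Y$.
   Context: A monoid given by generators and relations is the quotient of the free monoid on the generators by the congruence generated by the relations. *)

theory Defs
  imports Main
begin

datatype gen = a | b | c

type_synonym word = "gen list"

definition rels :: "(word \<times> word) set" where
  "rels = {([c,b,b],[b,b,a]), ([b,c],[a,b]), ([a,c],[c,a])}"

inductive mcong :: "word \<Rightarrow> word \<Rightarrow> bool" where
  rel: "(u, v) \<in> rels \<Longrightarrow> mcong u v"
| refl: "mcong u u"
| sym: "mcong u v \<Longrightarrow> mcong v u"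
| trans: "mcong u v \<Longrightarrow> mcong v w \<Longrightarrow> mcong u w"
| ctx: "mcong u v \<Longrightarrow> mcong (p @ u @ q) (p @ v @ q)"

quotient_type MBii = word / mcong
  morphisms rep_MBii abs_MBii
  by (auto intro!: equivpI reflpI sympI transpI intro: mcong.intros)

lift_definition one_MBii :: MBii is "[]" .
lift_definition mult_MBii :: "MBii \<Rightarrow> MBii \<Rightarrow> MBii" is "(@)"
proof -
  fix u u' v v' assume "mcong u u'" "mcong v v'"
  then have "mcong ([] @ u @ v) ([] @ u' @ v)" and "mcong (u' @ v @ []) (u' @ v' @ [])"
    using mcong.ctx[of u u' "[]" v] mcong.ctx[of v v' u' "[]"] by auto
  then show "mcong (u @ v) (u' @ v')" by (metis append_Nil append_Nil2 mcong.trans)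
qed

end

theory Submission
  imports Defs
begin

lemma mc_app: "mcong u u' \<Longrightarrow> mcong v v' \<Longrightarrow> mcong (u@v) (u'@v')"
  by (metis append_Nil append_Nil2 mcong.ctx mcong.trans)

lemma mc_r: "(l,r) \<in> rels \<Longrightarrow> mcong (p@l@q) (p@r@q)"
  by (intro mcong.ctx mcong.rel)

lemma ac: "mcong (replicate p a @ [c]) (c # replicate p a)"
proof (induction p)
  case 0 then show ?case by (simp add: mcong.refl)
next
  case (Suc p)
  have "mcong (a # replicate p a @ [c]) (a # c # replicate p a)"
    using mc_app[OF mcong.refl[of "[a]"] Suc] by simp
  moreover have "mcong (a # c # replicate p a) (c # a # replicate p a)"
    using mc_r[of "[a,c]" "[c,a]" "[]" "replicate p a"] by (simp add: rels_def)
  ultimately show ?case by (metis mcong.trans replicate_Suc append_Cons replicate_app_Cons_same)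
qed

lemma acq: "mcong (replicate p a @ replicate q c) (replicate q c @ replicate p a)"
proof (induction q)
  case 0 then show ?case by (simp add: mcong.refl)
next
  case (Suc q)
  have "replicate p a @ replicate (Suc q) c = (replicate p a @ [c]) @ replicate q c"
    by (simp add: replicate_app_Cons_same)
  moreover have "mcong ((replicate p a @ [c]) @ replicate q c) ((c # replicate p a) @ replicate q c)"
    by (rule mc_app[OF ac mcong.refl])
  moreover have "mcong ((c # replicate p a) @ replicate q c) (c # replicate q c @ replicate p a)"
    using mc_app[OF mcong.refl[of "[c]"] Suc] by simp
  ultimately show ?case using mcong.trans by (metis replicate_Suc append_Cons append_Nil)
qed

lemma ab: "mcong (replicate s a @ [b]) (b # replicate s c)"
proof (induction s)
  case 0 then show ?case by (simp add: mcong.refl)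
next
  case (Suc s)
  have "mcong (a # replicate s a @ [b]) (a # b # replicate s c)"
    using mc_app[OF mcong.refl[of "[a]"] Suc] by simp
  moreover have "mcong (a # b # replicate s c) (b # c # replicate s c)"
    using mc_r[of "[b,c]" "[a,b]" "[]" "replicate s c"] mcong.sym by (simp add: rels_def)
  ultimately show ?case by (metis mcong.trans replicate_Suc append_Cons replicate_app_Cons_same)
qed

lemma bc: "mcong (b # replicate t c) (replicate t a @ [b])"
  using ab mcong.sym by blast

lemma cbb: "mcong (replicate r c @ [b,b]) ([b,b] @ replicate r a)"
proof (induction r)
  case 0 then show ?case by (simp add: mcong.refl)
next
  case (Suc r)
  have h1: "mcong ([c] @ (replicate r c @ [b,b])) ([c] @ ([b,b] @ replicate r a))"
    by (rule mc_app[OF mcong.refl Suc])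
  have h2: "mcong ([] @ [c,b,b] @ replicate r a) ([] @ [b,b,a] @ replicate r a)"
    by (rule mc_r) (simp add: rels_def)
  have "mcong (replicate (Suc r) c @ [b,b]) ([b,b,a] @ replicate r a)"
    using mcong.trans[OF h1[simplified] h2[simplified]] by simp
  then show ?case by (simp add: replicate_app_Cons_same[symmetric])
qed

fun nb :: "word \<Rightarrow> nat" where
  "nb [] = 0" | "nb (b#w) = Suc (nb w)" | "nb (_#w) = nb w"

fun F :: "nat \<Rightarrow> word \<Rightarrow> nat \<Rightarrow> nat" where
  "F i [] r = 0"
| "F i (b#w) r = F (Suc i) w r"
| "F i (a#w) r = (if i mod 3 = r mod 3 then 1 else 0) + F i w r"
| "F i (c#w) r = (if (i+2) mod 3 = r mod 3 then 1 else 0) + F i w r"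

lemma nb_app[simp]: "nb (u@v) = nb u + nb v"
  by (induction u rule: nb.induct) auto

lemma F_app[simp]: "F i (u@v) r = F i u r + F (i + nb u) v r"
  by (induction i u r rule: F.induct) auto

lemma F_per: "F i w (r + 3*m) = F i w r"
proof (induction w arbitrary: i)
  case (Cons x w i) then show ?case by (cases x) auto
qed simp

lemma F_per_case: "\<And>i. F i (x#w) r = (case x of b \<Rightarrow> F (Suc i) w r
   | a \<Rightarrow> (if i mod 3 = r mod 3 then 1 else 0) + F i w r
   | c \<Rightarrow> (if (i+2) mod 3 = r mod 3 then 1 else 0) + F i w r)"
  by (cases x) auto

lemma F_shift: "F i w r = F 0 w (r + 2*i)"
proof (induction w arbitrary: i r)
  case Nil then show ?case by simp
next
  case (Cons x w)
  show ?case
  proof (cases x)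
    case a
    have e: "(i mod 3 = r mod 3) = (0 = (r + 2*i) mod 3)" by presburger
    show ?thesis using Cons e a by simp
  next
    case b
    have "F i (x#w) r = F 0 w (r + 2*i + 2)" using Cons[of "Suc i" r] b by simp
    moreover have "F 0 (x#w) (r + 2*i) = F 0 w (r + 2*i + 2)"
      using Cons[of 1 "r + 2*i"] b by simp
    ultimately show ?thesis by simp
  next
    case c
    have e: "((i+2) mod 3 = r mod 3) = (2 = (r + 2*i) mod 3)" by presburger
    show ?thesis using Cons e c by simp
  qed
qed

lemma mc_inv: "mcong u v \<Longrightarrow> nb u = nb v \<and> (\<forall>i r. F i u r = F i v r)"
proof (induction rule: mcong.induct)
  case (rel u v)
  have e1: "\<And>i r::nat. ((i+2) mod 3 = r mod 3) = ((Suc (Suc i)) mod 3 = r mod 3)" by presburger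
  have e2: "\<And>i r::nat. ((Suc i+2) mod 3 = r mod 3) = (i mod 3 = r mod 3)" by presburger
  from rel show ?case by (auto simp: rels_def e1 e2)
qed auto

lemmas [trans] = mcong.trans

definition nf :: "word \<Rightarrow> word" where
  "nf w = (if nb w = 0 then replicate (F 0 w 0) a @ replicate (F 0 w 2) c
     else replicate (nb w - 1) b @ replicate (F 0 w (nb w + 1)) c @ [b] @
          replicate (F 0 w (nb w)) a @ replicate (F 0 w (nb w + 2)) c)"

lemma F_nb0: "nb w = 0 \<Longrightarrow> r mod 3 = (i+1) mod 3 \<Longrightarrow> F i w r = 0"
proof (induction w)
  case (Cons x w) then show ?case by (cases x) (auto, presburger+)
qed simp

lemma ctx': "mcong u v \<Longrightarrow> mcong (p@u@q) (p@v@q)" by (rule mcong.ctx)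

lemma snoc_a0: "mcong (replicate p a @ replicate q c @ [a]) (replicate (Suc p) a @ replicate q c)"
proof -
  have "mcong (replicate q c @ [a]) ([a] @ replicate q c)"
    using acq[of 1 q] mcong.sym by simp
  then have "mcong (replicate p a @ (replicate q c @ [a]) @ []) (replicate p a @ ([a] @ replicate q c) @ [])"
    by (rule ctx')
  then show ?thesis by (simp add: replicate_app_Cons_same)
qed

lemma snoc_b0: "mcong (replicate p a @ replicate q c @ [b]) (replicate q c @ [b] @ replicate p c)"
proof -
  have "mcong (replicate p a @ replicate q c @ [b]) (replicate q c @ replicate p a @ [b])"
    using ctx'[where p="[]" and q="[b]", OF acq] by simp
  also have "mcong (replicate q c @ replicate p a @ [b]) (replicate q c @ b # replicate p c)"
    using ctx'[where p="replicate q c" and q="[]", OF ab] by simp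
  finally show ?thesis by simp
qed

lemma snoc_b: "mcong (P @ replicate r c @ b # replicate s a @ replicate t c @ [b])
   (P @ b # replicate t c @ b # replicate r a @ replicate s c)"
proof -
  have "mcong (P @ replicate r c @ b # replicate s a @ replicate t c @ [b])
              (P @ replicate r c @ b # replicate t c @ replicate s a @ [b])"
    using ctx'[where p="P @ replicate r c @ [b]" and q="[b]", OF acq] by simp
  also have "mcong (P @ replicate r c @ b # replicate t c @ replicate s a @ [b])
                   (P @ replicate r c @ b # replicate t c @ b # replicate s c)"
    using ctx'[where p="P @ replicate r c @ b # replicate t c" and q="[]", OF ab] by simp
  also have "mcong (P @ replicate r c @ b # replicate t c @ b # replicate s c)
                   (P @ replicate r c @ replicate t a @ b # b # replicate s c)"
    using ctx'[where p="P @ replicate r c" and q="b # replicate s c", OF bc] by simp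
  also have "mcong (P @ replicate r c @ replicate t a @ b # b # replicate s c)
                   (P @ replicate t a @ replicate r c @ b # b # replicate s c)"
    using ctx'[where p=P and q="b # b # replicate s c", OF mcong.sym[OF acq]] by simp
  also have "mcong (P @ replicate t a @ replicate r c @ b # b # replicate s c)
                   (P @ replicate t a @ b # b # replicate r a @ replicate s c)"
    using ctx'[where p="P @ replicate t a" and q="replicate s c", OF cbb] by simp
  also have "mcong (P @ replicate t a @ b # b # replicate r a @ replicate s c)
                   (P @ b # replicate t c @ b # replicate r a @ replicate s c)"
    using ctx'[where p=P and q="b # replicate r a @ replicate s c", OF ab] by simp
  finally show ?thesis .
qed

lemma mods: "k mod 3 \<noteq> (k+1) mod 3" "k mod 3 \<noteq> (k+2) mod 3" "(k+1) mod 3 \<noteq> (k+2) mod 3"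
  "(k+1) mod 3 \<noteq> k mod 3" "(k+2) mod 3 \<noteq> k mod 3" "(k+2) mod 3 \<noteq> (k+1) mod 3"
  "(k+2+2) mod 3 = (k+1) mod 3"
  for k :: nat by presburger+

lemma nf_snoc: "mcong (nf w @ [x]) (nf (w @ [x]))"
proof -
  define k where "k = nb w"
  define f where "f = F 0 w"
  have Fx: "F 0 (w@[x]) r = f r + F k [x] r" for r by (simp add: f_def k_def)
  show ?thesis
  proof (cases "k = 0")
    case True
    have f1: "f 1 = 0" unfolding f_def using F_nb0[of w 1 0] True k_def by simp
    have nw: "nf w = replicate (f 0) a @ replicate (f 2) c" using True by (simp add: nf_def f_def k_def)
    show ?thesis
    proof (cases x)
      case a
      have "nf (w@[x]) = replicate (Suc (f 0)) a @ replicate (f 2) c"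
        using True a by (simp add: nf_def Fx k_def f_def)
      then show ?thesis using nw snoc_a0 a by simp
    next
      case b
      have "nf (w@[x]) = replicate (f 2) c @ [b] @ replicate (f 0) c"
        using True b f1 F_per[of 0 w 0 1] by (simp add: nf_def Fx k_def f_def numeral_3_eq_3 numeral_2_eq_2)
      then show ?thesis using nw snoc_b0 b by simp
    next
      case c
      have "nf (w@[x]) = replicate (f 0) a @ replicate (Suc (f 2)) c"
        using True c by (simp add: nf_def Fx k_def f_def)
      then show ?thesis using nw c by (simp add: mcong.refl replicate_app_Cons_same)
    qed
  next
    case False
    have nw: "nf w = replicate (k - 1) b @ replicate (f (k+1)) c @ [b] @ replicate (f k) a @ replicate (f (k+2)) c"
      using False by (simp add: nf_def f_def k_def)
    show ?thesis
    proof (cases x)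
      case a
      have "nf (w@[x]) = replicate (k - 1) b @ replicate (f (k+1)) c @ [b] @ replicate (Suc (f k)) a @ replicate (f (k+2)) c"
        using False a mods[of k] by (simp add: nf_def Fx k_def f_def)
      moreover have "mcong (nf w @ [x]) (replicate (k - 1) b @ replicate (f (k+1)) c @ [b] @ replicate (Suc (f k)) a @ replicate (f (k+2)) c)"
        using ctx'[where p="replicate (k - 1) b @ replicate (f (k+1)) c @ [b]" and q="[]", OF snoc_a0[of "f k" "f (k+2)"]] nw a
        by simp
      ultimately show ?thesis by simp
    next
      case c
      have "nf (w@[x]) = replicate (k - 1) b @ replicate (f (k+1)) c @ [b] @ replicate (f k) a @ replicate (Suc (f (k+2))) c"
        using False c mods[of k] by (simp add: nf_def Fx k_def f_def)
      then show ?thesis using nw c by (simp add: mcong.refl replicate_app_Cons_same)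
    next
      case b
      have P: "replicate k b = replicate (k - 1) b @ [b]" using False
        by (cases k) (auto simp: replicate_append_same)
      have f3: "f (k+3) = f k" using F_per[of 0 w k 1] by (simp add: f_def)
      have "nf (w@[x]) = replicate k b @ replicate (f (k+2)) c @ [b] @ replicate (f (k+1)) a @ replicate (f (k+3)) c"
        using b by (simp add: nf_def Fx k_def f_def numeral_3_eq_3)
      also have "\<dots> = replicate (k - 1) b @ b # replicate (f (k+2)) c @ b # replicate (f (k+1)) a @ replicate (f k) c"
        using P f3 by simp
      finally show ?thesis using snoc_b[of "replicate (k - 1) b" "f (k+1)" "f k" "f (k+2)"] nw b by simp
    qed
  qed
qed

lemma to_nf: "mcong w (nf w)"
proof (induction w rule: rev_induct)
  case Nil then show ?case by (simp add: nf_def mcong.refl)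
next
  case (snoc x w)
  have "mcong (w @ [x]) (nf w @ [x])" by (rule mc_app[OF snoc mcong.refl])
  then show ?case using nf_snoc mcong.trans by blast
qed

lemma complete: "nb u = nb v \<Longrightarrow> (\<And>r. F 0 u r = F 0 v r) \<Longrightarrow> mcong u v"
proof -
  assume "nb u = nb v" "\<And>r. F 0 u r = F 0 v r"
  then have "nf u = nf v" by (simp add: nf_def)
  then show ?thesis using to_nf[of u] to_nf[of v] mcong.sym mcong.trans by metis
qed

lemma cancel_words: "mcong ((A @ X) @ B) ((A @ Y) @ B) \<Longrightarrow> mcong X Y"
proof -
  assume h: "mcong ((A @ X) @ B) ((A @ Y) @ B)"
  from mc_inv[OF h] have n: "nb X = nb Y" and ff: "\<And>i r. F i ((A @ X) @ B) r = F i ((A @ Y) @ B) r"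
    by auto
  have "F 0 X r = F 0 Y r" for r
  proof -
    have "F 0 (A @ X) (r + nb A) = F 0 (A @ Y) (r + nb A)" using ff[of 0 "r + nb A"] n by simp
    then have "F (nb A) X (r + nb A) = F (nb A) Y (r + nb A)" by simp
    then have "F 0 X (r + 3 * nb A) = F 0 Y (r + 3 * nb A)"
      using F_shift[of "nb A" X] F_shift[of "nb A" Y] by (simp add: algebra_simps)
    then show ?thesis by (simp add: F_per)
  qed
  then show ?thesis using complete n by blast
qed

theorem theorem4:
  fixes A B X Y :: MBii
  assumes "mult_MBii (mult_MBii A X) B = mult_MBii (mult_MBii A Y) B"
  shows "X = Y"
  using assms by transfer (erule cancel_words)

end
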